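(* Let $m,r,s,t$ be any integers and $n\ge0$ an integer, and set \[ X=q^mu_{r-s}^2+q^{2m-s}u_{r-m}^2+q^mu_{r-s}u_{r-m}v_{m-s}, \] assumed nonzero. Then \[ \begin{aligned} &\sum_{j=0}^{n}(-1)^jq^{(m-s)j}u_{r-s}^{n-j}u_{r-m}^{j}w_{(s-m)j+mn+t}\\ &=\sum_{j=0}^{n}\frac{u_{m-s}^j}{2^{j+1}}\left(u_{r-s}^{n-j}w_{(r-m)j+mn+t}+(-1)^{n-j}q^{(m-s)(n-j)}u_{r-m}^{n-j}w_{s(n-j)+t+rj}\right)\\ &=\frac{u_{r-s}^{n+2}w_{mn+t}+u_{r-s}^{n+1}u_{r-m}w_{mn+m+t-s}}{u_{r-s}^2+q^{m-s}u_{r-m}^2+u_{r-s}u_{r-m}v_{m-s}} +\frac{(-1)^nu_{r-m}^{n+1}\left(q^{(m-s)(n+1)+m}u_{r-s}w_{sn+s+t-m}+q^{(m-s)(n+2)+s}u_{r-m}w_{sn+t}\right)}{X}. \end{aligned} \]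
   Context: Let $p,q$ be real numbers with $p\neq0$, $q\neq0$ and $p^2-4q>0$; let $a,b$ be complex numbers. Put $\Delta=\sqrt{p^2-4q}>0$, $\tau=(p+\Delta)/2$, $\sigma=(p-\Delta)/2$. The Horadam sequence $w_n=w_n(a,b;p,q)$ is defined by $w_0=a$, $w_1=b$, $w_n=pw_{n-1}-qw_{n-2}$, extended to all integers $n$ via $w_{n-2}=(pw_{n-1}-w_n)/q$; equivalently $w_n=A\tau^n+B\sigma^n$ with $A=(b-a\sigma)/\Delta$, $B=(a\tau-b)/\Delta$. Write $u_n=w_n(0,1;p,q)=(\tau^n-\sigma^n)/\Delta$ and $v_n=w_n(2,p;p,q)=\tau^n+\sigma^n$. *)

theory Defs
  imports Complex_Main
begin

definition hDelta :: "real \<Rightarrow> real \<Rightarrow> real" where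
  "hDelta p q = sqrt (p^2 - 4*q)"

definition htau :: "real \<Rightarrow> real \<Rightarrow> real" where
  "htau p q = (p + hDelta p q) / 2"

definition hsigma :: "real \<Rightarrow> real \<Rightarrow> real" where
  "hsigma p q = (p - hDelta p q) / 2"

definition horadam :: "complex \<Rightarrow> complex \<Rightarrow> real \<Rightarrow> real \<Rightarrow> int \<Rightarrow> complex" where
  "horadam a b p q n =
     (b - a * of_real (hsigma p q)) / of_real (hDelta p q) * of_real (htau p q powi n)
   + (a * of_real (htau p q) - b) / of_real (hDelta p q) * of_real (hsigma p q powi n)"

text \<open>u_n = w_n(0,1;p,q) and v_n = w_n(2,p;p,q), real-valued.\<close>
definition hu :: "real \<Rightarrow> real \<Rightarrow> int \<Rightarrow> real" where
  "hu p q n = (htau p q powi n - hsigma p q powi n) / hDelta p q"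

definition hv :: "real \<Rightarrow> real \<Rightarrow> int \<Rightarrow> real" where
  "hv p q n = htau p q powi n + hsigma p q powi n"

end

theory Submission
  imports Defs
begin

lemma geoB:
  fixes a c :: real
  shows "(a - c) * (\<Sum>j=0..n. a^(n-j) * c^j) = a^(n+1) - c^(n+1)"
proof -
  have "a^(Suc n) - c^(Suc n) = (a - c) * (\<Sum>p<Suc n. (a ^ p) * c ^ (n - p))"
    by (rule diff_power_eq_sum)
  also have "(\<Sum>p<Suc n. (a ^ p) * c ^ (n - p)) = (\<Sum>j=0..n. a^(n-j) * c^j)"
  proof -
    have "(\<Sum>p<Suc n. (a ^ p) * c ^ (n - p)) = (\<Sum>p=0..n. (a ^ p) * c ^ (n - p))"
      by (rule sum.cong) auto
    also have "\<dots> = (\<Sum>j=0..n. a^(n-j) * c^j)"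
      by (subst sum.atLeastAtMost_rev[of _ 0 n, simplified]) (auto intro!: sum.cong)
    finally show ?thesis .
  qed
  finally show ?thesis by simp
qed

lemma geoA:
  fixes a c :: real
  shows "(\<Sum>j=0..n. a^(n-j) * c^j) = (\<Sum>j=0..n. ((a+c)/2)^j / 2 * (a^(n-j) + c^(n-j)))"
proof (cases "a = c")
  case True
  show ?thesis unfolding True
    by (rule sum.cong) (auto simp flip: power_add)
next
  case False
  define b where "b = (a+c)/2"
  have h1: "(a - b) * (\<Sum>j=0..n. a^(n-j) * b^j) = a^(n+1) - b^(n+1)" by (rule geoB)
  have h2: "(c - b) * (\<Sum>j=0..n. c^(n-j) * b^j) = c^(n+1) - b^(n+1)" by (rule geoB)
  have "(a - c) * (\<Sum>j=0..n. b^j / 2 * (a^(n-j) + c^(n-j)))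
      = (a - b) * (\<Sum>j=0..n. a^(n-j) * b^j) - (c - b) * (\<Sum>j=0..n. c^(n-j) * b^j)"
    unfolding sum_distrib_left sum_subtractf[symmetric]
    by (rule sum.cong) (simp_all add: b_def field_simps)
  also have "\<dots> = (a - c) * (\<Sum>j=0..n. a^(n-j) * c^j)" using h1 h2 geoB[of a c n] by simp
  finally show ?thesis using False unfolding b_def by simp
qed

lemma pw_lin: fixes z :: real assumes "z \<noteq> 0"
  shows "z powi (a * int k + b) = (z powi a)^k * z powi b"
  using assms by (simp add: power_int_add power_int_power')

lemma alg1:
  fixes zm zs zt ws c U V K :: real
  assumes "zm \<noteq> 0" "zs \<noteq> 0"
  shows "(zm*(c*zs*ws/zm))*(U^(n+2)*(zm^n*zt) + U^(n+1)*V*(zm^n*(zm*zt/zs))) + K*V^(n+1)*((c^(n+1)*(zm*(c*zs*ws/zm)))*U*(zs^n*(zs*zt/zm)) + (c^(n+2)*(zs*ws))*V*(zs^n*zt)) = zt*((U*zm)^(n+1) - (-K*c^(n+1)*V^(n+1)*zs^(n+1)))*(U*(c*zs*ws/zm) - (-c*V*ws))"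
  using assms by (simp add: power_Suc power_mult_distrib field_simps)
lemma alg0:
  fixes zm zs zt ws c U V :: real
  assumes "zm \<noteq> 0" "zs \<noteq> 0"
  shows "(zm*(c*zs*ws/zm))*(U^(n+2)*(zm^n*zt) + U^(n+1)*V*(zm^n*(zm*zt/zs))) + (-1)^n*V^(n+1)*((c^(n+1)*(zm*(c*zs*ws/zm)))*U*(zs^n*(zs*zt/zm)) + (c^(n+2)*(zs*ws))*V*(zs^n*zt)) = zt*((U*zm)^(n+1) - (-c*V*zs)^(n+1))*(U*(c*zs*ws/zm) - (-c*V*ws))"
proof -
  define K where "K = (-1::real)^n"
  have "(-c*V*zs)^(n+1) = ((-1) * (c*V*zs))^(n+1)" by simp
  also have "\<dots> = (-1)^(n+1) * (c*V*zs)^(n+1)" by (rule power_mult_distrib)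
  also have "\<dots> = -K*c^(n+1)*V^(n+1)*zs^(n+1)" by (simp add: K_def power_mult_distrib)
  finally have h: "(-c*V*zs)^(n+1) = -K*c^(n+1)*V^(n+1)*zs^(n+1)" .
  show ?thesis unfolding h K_def[symmetric] by (rule alg1[OF assms])
qed

lemma termF:
  fixes z z' U V :: real and m s t :: int and n :: nat
  assumes z: "z \<noteq> 0" and z': "z' \<noteq> 0"
  shows "(z*z') powi m * (U^(n+2) * z powi (m*int n+t) + U^(n+1)*V * z powi (m*int n+m+t-s))
     + (-1)^n * V^(n+1) * ((z*z') powi ((m-s)*(int n+1)+m) * U * z powi (s*int n+s+t-m)
        + (z*z') powi ((m-s)*(int n+2)+s) * V * z powi (s*int n+t))
   = z powi t * ((U*z powi m)^(n+1) - (-((z*z') powi (m-s)) * V * z powi s)^(n+1))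
       * (U * z' powi m - (-((z*z') powi (m-s))*V*z' powi s))"
proof -
  define zm zs zt wm ws c where "zm = z powi m" "zs = z powi s" "zt = z powi t"
     "wm = z' powi m" "ws = z' powi s" "c = (z*z') powi (m-s)"
  note defs = zm_zs_zt_wm_ws_c_def
  have nz: "zm \<noteq> 0" "zs \<noteq> 0" "wm \<noteq> 0" "ws \<noteq> 0" "zt \<noteq> 0"
    using z z' by (auto simp: defs)
  have q: "(z*z') powi k = z powi k * z' powi k" for k by (rule power_int_mult_distrib)
  have hc: "c = (zm*wm)/(zs*ws)" using z z' by (simp add: defs q power_int_diff)
  have hw: "wm = c*zs*ws/zm" using nz hc by (simp add: field_simps)
  have e1: "z powi (m*int n + t) = zm^n * zt"
    using pw_lin[OF z, of m n t] by (simp add: defs)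
  have e2: "z powi (m*int n+m+t-s) = zm^n * (zm * zt / zs)"
    using pw_lin[OF z, of m n "m+t-s"] z
    by (simp add: defs power_int_add power_int_diff add.assoc add_diff_eq)
  have e3: "z powi (s*int n+s+t-m) = zs^n * (zs * zt / zm)"
    using pw_lin[OF z, of s n "s+t-m"] z
    by (simp add: defs power_int_add power_int_diff add.assoc add_diff_eq)
  have e4: "z powi (s*int n + t) = zs^n * zt"
    using pw_lin[OF z, of s n t] by (simp add: defs)
  have gq: "(z*z') powi ((m-s)*int k + b) = c^k * (z*z') powi b" for k b
    using pw_lin[of "z*z'" "m-s" k b] z z' by (simp add: defs)
  have q1: "(z*z') powi m = zm*wm" by (simp add: q defs)
  have q2: "(z*z') powi ((m-s)*(int n+1)+m) = c^(n+1) * (zm*wm)"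
  proof -
    have ex: "(m-s)*(int n+1)+m = (m-s)*int(n+1)+m" by simp
    show ?thesis by (simp only: ex gq q1)
  qed
  have q3: "(z*z') powi ((m-s)*(int n+2)+s) = c^(n+2) * (zs*ws)"
  proof -
    have ex: "(m-s)*(int n+2)+s = (m-s)*int(n+2)+s" by simp
    show ?thesis by (simp only: ex gq) (simp add: q defs)
  qed
  show ?thesis
    unfolding e1 e2 e3 e4 q2 q3 q1
    unfolding defs[symmetric]
    unfolding hw
    by (rule alg0[OF nz(1,2)])
qed


lemma negpow: "(-(c::real)*V*z)^j = (-1)^j * (c^j*V^j*z^j)"
proof -
  have "(-c*V*z)^j = ((-1) * (c*V*z))^j" by simp
  also have "\<dots> = (-1)^j * (c*V*z)^j" by (rule power_mult_distrib)
  finally show ?thesis by (simp add: power_mult_distrib)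
qed

lemma termC:
  fixes z q U V :: real and m s t :: int
  assumes z: "z \<noteq> 0" and jn: "j \<le> n"
  shows "(-1)^j * (q powi ((m-s)*int j) * U^(n-j) * V^j) * z powi ((s-m)*int j + m*int n + t)
     = z powi t * ((U * z powi m)^(n-j) * (-(q powi (m-s)) * V * z powi s)^j)"
proof -
  have ex: "(s-m)*int j + m*int n + t = m*int(n-j) + (s*int j + t)"
    using jn by (simp add: of_nat_diff algebra_simps)
  have e: "z powi ((s-m)*int j + m*int n + t) = (z powi m)^(n-j) * ((z powi s)^j * z powi t)"
    unfolding ex pw_lin[OF z] ..
  have qq: "q powi ((m-s)*int j) = (q powi (m-s))^j" by (simp add: power_int_power')
  show ?thesis unfolding e qq negpow by (simp add: power_mult_distrib)
qed

lemma termE: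
  fixes z q U V W :: real and m s t r :: int
  assumes z: "z \<noteq> 0" and jn: "j \<le> n"
    and hid: "W * z powi r = U*z powi m + (-(q powi (m-s))*V*z powi s)"
  shows "W^j/2^(j+1) * (U^(n-j) * z powi ((r-m)*int j + m*int n + t)
      + (-1)^(n-j) * (q powi ((m-s)*int(n-j)) * V^(n-j)) * z powi (s*int(n-j) + t + r*int j))
   = z powi t * ((((U*z powi m) + (-(q powi (m-s))*V*z powi s))/2)^j/2
        * ((U*z powi m)^(n-j) + (-(q powi (m-s))*V*z powi s)^(n-j)))"
proof -
  have ex1: "(r-m)*int j + m*int n + t = r*int j + (m*int(n-j) + t)"
    using jn by (simp add: of_nat_diff algebra_simps)
  have ex2: "s*int(n-j) + t + r*int j = s*int(n-j) + (r*int j + t)"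
    by (simp add: algebra_simps)
  have e1: "z powi ((r-m)*int j + m*int n + t) = (z powi r)^j * ((z powi m)^(n-j) * z powi t)"
    unfolding ex1 pw_lin[OF z] ..
  have e2: "z powi (s*int(n-j) + t + r*int j) = (z powi s)^(n-j) * ((z powi r)^j * z powi t)"
    unfolding ex2 pw_lin[OF z] ..
  have qq: "q powi ((m-s)*int (n-j)) = (q powi (m-s))^(n-j)" by (simp add: power_int_power')
  show ?thesis unfolding e1 e2 qq hid[symmetric] negpow
    by (simp add: power_mult_distrib power_divide field_simps)
qed

lemma identD0:
  fixes xm xs xr ym ys yr d :: real
  assumes "xm \<noteq> 0" "xs \<noteq> 0" "xr \<noteq> 0" "ym \<noteq> 0" "ys \<noteq> 0" "yr \<noteq> 0" "d \<noteq> 0"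
  shows "((xm/xs - ym/ys)/d) * xr = ((xr/xs - yr/ys)/d) * xm + (-((xm*ym)/(xs*ys)) * ((xr/xm - yr/ym)/d) * xs)"
    and "((xm/xs - ym/ys)/d) * yr = ((xr/xs - yr/ys)/d) * ym + (-((xm*ym)/(xs*ys)) * ((xr/xm - yr/ym)/d) * ys)"
  using assms by (simp_all add: field_simps)

lemma identD:
  fixes x y z :: real and m r s :: int
  assumes x: "x \<noteq> 0" and y: "y \<noteq> 0" and xy: "x \<noteq> y" and zz: "z = x \<or> z = y"
  shows "((x powi (m-s) - y powi (m-s))/(x-y)) * z powi r
     = ((x powi (r-s) - y powi (r-s))/(x-y)) * z powi m
       + (-((x*y) powi (m-s)) * ((x powi (r-m) - y powi (r-m))/(x-y)) * z powi s)"
proof -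
  have d: "x - y \<noteq> 0" using xy by simp
  have nz: "x powi k \<noteq> 0" "y powi k \<noteq> 0" for k using x y by auto
  have pd: "x powi (a - b) = x powi a / x powi b" "y powi (a - b) = y powi a / y powi b" for a b
    using x y by (auto simp: power_int_diff)
  note I = identD0[OF nz(1)[of m] nz(1)[of s] nz(1)[of r] nz(2)[of m] nz(2)[of s] nz(2)[of r] d]
  from zz show ?thesis
    unfolding pd power_int_mult_distrib using I by auto
qed


lemma sumAB: fixes A B :: complex
  shows "(\<Sum>j\<in>I. A*of_real(f j) + B*of_real(g j)) = A*of_real(sum f I) + B*of_real(sum g I)"
  by (simp add: sum.distrib sum_distrib_left)

lemma lin2: fixes A B :: complex
  shows "(-1)^j * of_real R * (A*of_real X + B*of_real Y) = A * of_real((-1)^j*R*X) + B*of_real((-1)^j*R*Y)"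
  by (simp add: algebra_simps)

lemma lin3: fixes A B :: complex
  shows "of_real w * (of_real P*(A*of_real X1 + B*of_real Y1) + (-1)^k*of_real R*(A*of_real X2+B*of_real Y2))
    = A*of_real(w*(P*X1 + (-1)^k*R*X2)) + B*of_real(w*(P*Y1 + (-1)^k*R*Y2))"
  by (simp add: algebra_simps)

lemma lin4: fixes A B :: complex
  assumes "D \<noteq> 0" "X \<noteq> 0"
  shows "(of_real a1*(A*of_real x1 + B*of_real y1) + of_real a2*(A*of_real x2+B*of_real y2))/of_real D
    + ((-1)^n*of_real a3*(of_real a4*(A*of_real x3+B*of_real y3) + of_real a5*(A*of_real x4 + B*of_real y4)))/of_real X
  = A*of_real((a1*x1+a2*x2)/D + (-1)^n*a3*(a4*x3+a5*x4)/X) + B*of_real((a1*y1+a2*y2)/D + (-1)^n*a3*(a4*y3+a5*y4)/X)"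
  using assms by (simp add: field_simps)

lemma prodX:
  fixes xm xs ym ys U V c :: real
  assumes "xs \<noteq> 0" "ys \<noteq> 0" "c = (xm*ym)/(xs*ys)"
  shows "(xm*ym)*(U^2 + c*V^2 + U*V*(xm/xs + ym/ys)) = (U*xm - (-c*V*xs))*(U*ym - (-c*V*ys))"
  using assms(1,2) unfolding assms(3) by (simp add: field_simps power2_eq_square)

theorem theorem14:
  fixes p q :: real and a b :: complex and m r s t :: int and n :: nat
  assumes "p \<noteq> 0" and "q \<noteq> 0" and "p^2 - 4*q > 0"
    and "q powi m * (hu p q (r-s))^2 + q powi (2*m-s) * (hu p q (r-m))^2
         + q powi m * hu p q (r-s) * hu p q (r-m) * hv p q (m-s) \<noteq> 0"
  shows
   "(\<Sum>j=0..n. (-1)^j * of_real (q powi ((m-s)*int j) * hu p q (r-s) ^ (n-j) * hu p q (r-m) ^ j)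
        * horadam a b p q ((s-m)*int j + m*int n + t))
    = (\<Sum>j=0..n. of_real (hu p q (m-s) ^ j / 2^(j+1)) *
        (of_real (hu p q (r-s) ^ (n-j)) * horadam a b p q ((r-m)*int j + m*int n + t)
         + (-1)^(n-j) * of_real (q powi ((m-s)*int (n-j)) * hu p q (r-m) ^ (n-j))
           * horadam a b p q (s*int (n-j) + t + r*int j)))
   \<and> (\<Sum>j=0..n. of_real (hu p q (m-s) ^ j / 2^(j+1)) *
        (of_real (hu p q (r-s) ^ (n-j)) * horadam a b p q ((r-m)*int j + m*int n + t)
         + (-1)^(n-j) * of_real (q powi ((m-s)*int (n-j)) * hu p q (r-m) ^ (n-j))
           * horadam a b p q (s*int (n-j) + t + r*int j)))
    = (of_real (hu p q (r-s) ^ (n+2)) * horadam a b p q (m*int n + t)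
        + of_real (hu p q (r-s) ^ (n+1) * hu p q (r-m)) * horadam a b p q (m*int n + m + t - s))
      / of_real ((hu p q (r-s))^2 + q powi (m-s) * (hu p q (r-m))^2
                 + hu p q (r-s) * hu p q (r-m) * hv p q (m-s))
      + ((-1)^n * of_real (hu p q (r-m) ^ (n+1)) *
          (of_real (q powi ((m-s)*(int n+1) + m) * hu p q (r-s)) * horadam a b p q (s*int n + s + t - m)
           + of_real (q powi ((m-s)*(int n+2) + s) * hu p q (r-m)) * horadam a b p q (s*int n + t)))
      / of_real (q powi m * (hu p q (r-s))^2 + q powi (2*m-s) * (hu p q (r-m))^2
         + q powi m * hu p q (r-s) * hu p q (r-m) * hv p q (m-s))"
  proof -
  define x where "x = htau p q"
  define y where "y = hsigma p q"
  define d where "d = hDelta p q"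
  have d_pos: "d > 0" using assms(3) by (simp add: d_def hDelta_def)
  have xy_d: "x - y = d" by (simp add: x_def y_def d_def htau_def hsigma_def field_simps)
  have dsq: "d^2 = p^2 - 4*q" using assms(3) by (simp add: d_def hDelta_def)
  have xyq: "x*y = q"
  proof -
    have "x*y = (p^2 - d^2)/4" by (simp add: x_def y_def d_def htau_def hsigma_def field_simps power2_eq_square)
    then show ?thesis using dsq by simp
  qed
  have x0: "x \<noteq> 0" and y0: "y \<noteq> 0" using xyq assms(2) by auto
  have xney: "x \<noteq> y" using xy_d d_pos by auto
  have hu_eq: "hu p q k = (x powi k - y powi k)/(x-y)" for k
    by (simp add: hu_def x_def y_def d_def xy_d[unfolded x_def y_def d_def])
  have hv_eq: "hv p q k = x powi k + y powi k" for k by (simp add: hv_def x_def y_def)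
  define A B where "A = (b - a*of_real y)/of_real d" "B = (a*of_real x - b)/of_real d"
  have hor: "horadam a b p q k = A * of_real (x powi k) + B * of_real (y powi k)" for k
    by (simp add: horadam_def A_B_def x_def y_def d_def)
  define U V W where "U = hu p q (r-s)" "V = hu p q (r-m)" "W = hu p q (m-s)"
  define a1 a2 S where "a1 = (\<lambda>z. U * z powi m)" "a2 = (\<lambda>z. -(q powi (m-s)) * V * z powi s)"
    "S = (\<lambda>z. \<Sum>j=0..n. (a1 z)^(n-j) * (a2 z)^j)"
  have hid: "W * z powi r = U*z powi m + (-(q powi (m-s))*V*z powi s)" if "z = x \<or> z = y" for z
    using identD[OF x0 y0 xney that, of m s r] unfolding U_V_W_def hu_eq xyq .
  have L: "(\<Sum>j=0..n. (-1)^j * of_real (q powi ((m-s)*int j) * hu p q (r-s) ^ (n-j) * hu p q (r-m) ^ j)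
        * horadam a b p q ((s-m)*int j + m*int n + t))
     = A * of_real (x powi t * S x) + B * of_real (y powi t * S y)"
  proof -
    have "(\<Sum>j=0..n. (-1)^j * of_real (q powi ((m-s)*int j) * hu p q (r-s) ^ (n-j) * hu p q (r-m) ^ j)
        * horadam a b p q ((s-m)*int j + m*int n + t))
      = (\<Sum>j=0..n. A * of_real (x powi t * ((a1 x)^(n-j) * (a2 x)^j)) + B * of_real (y powi t * ((a1 y)^(n-j) * (a2 y)^j)))"
    proof (rule sum.cong)
      fix j assume "j \<in> {0..n}"
      then have jn: "j \<le> n" by simp
      show "(-1)^j * of_real (q powi ((m-s)*int j) * hu p q (r-s) ^ (n-j) * hu p q (r-m) ^ j)
        * horadam a b p q ((s-m)*int j + m*int n + t) =
        A * of_real (x powi t * ((a1 x)^(n-j) * (a2 x)^j)) + B * of_real (y powi t * ((a1 y)^(n-j) * (a2 y)^j))"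
        unfolding hor lin2 termC[OF x0 jn] termC[OF y0 jn] a1_a2_S_def U_V_W_def ..
    qed simp
    also have "\<dots> = A * of_real (x powi t * S x) + B * of_real (y powi t * S y)"
      unfolding sumAB a1_a2_S_def sum_distrib_left ..
    finally show ?thesis .
  qed
  have M: "(\<Sum>j=0..n. of_real (hu p q (m-s) ^ j / 2^(j+1)) *
        (of_real (hu p q (r-s) ^ (n-j)) * horadam a b p q ((r-m)*int j + m*int n + t)
         + (-1)^(n-j) * of_real (q powi ((m-s)*int (n-j)) * hu p q (r-m) ^ (n-j))
           * horadam a b p q (s*int (n-j) + t + r*int j)))
     = A * of_real (x powi t * S x) + B * of_real (y powi t * S y)"
  proof -
    have "(\<Sum>j=0..n. of_real (hu p q (m-s) ^ j / 2^(j+1)) *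
        (of_real (hu p q (r-s) ^ (n-j)) * horadam a b p q ((r-m)*int j + m*int n + t)
         + (-1)^(n-j) * of_real (q powi ((m-s)*int (n-j)) * hu p q (r-m) ^ (n-j))
           * horadam a b p q (s*int (n-j) + t + r*int j)))
      = (\<Sum>j=0..n. A * of_real (x powi t * ((((a1 x) + (a2 x))/2)^j/2 * ((a1 x)^(n-j) + (a2 x)^(n-j))))
           + B * of_real (y powi t * ((((a1 y) + (a2 y))/2)^j/2 * ((a1 y)^(n-j) + (a2 y)^(n-j)))))"
    proof (rule sum.cong)
      fix j assume "j \<in> {0..n}"
      then have jn: "j \<le> n" by simp
      show "of_real (hu p q (m-s) ^ j / 2^(j+1)) *
        (of_real (hu p q (r-s) ^ (n-j)) * horadam a b p q ((r-m)*int j + m*int n + t)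
         + (-1)^(n-j) * of_real (q powi ((m-s)*int (n-j)) * hu p q (r-m) ^ (n-j))
           * horadam a b p q (s*int (n-j) + t + r*int j)) =
        A * of_real (x powi t * ((((a1 x) + (a2 x))/2)^j/2 * ((a1 x)^(n-j) + (a2 x)^(n-j))))
           + B * of_real (y powi t * ((((a1 y) + (a2 y))/2)^j/2 * ((a1 y)^(n-j) + (a2 y)^(n-j))))"
        unfolding hor lin3 a1_a2_S_def
        unfolding U_V_W_def[symmetric]
        unfolding termE[OF x0 jn hid[of x, OF disjI1[OF refl]]] termE[OF y0 jn hid[of y, OF disjI2[OF refl]]] ..
    qed simp
    also have "\<dots> = A * of_real (x powi t * S x) + B * of_real (y powi t * S y)"
      unfolding sumAB sum_distrib_left[symmetric] a1_a2_S_def geoA ..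
    finally show ?thesis .
  qed
  define Xr where "Xr = q powi m * (hu p q (r-s))^2 + q powi (2*m-s) * (hu p q (r-m))^2
         + q powi m * hu p q (r-s) * hu p q (r-m) * hv p q (m-s)"
  define Dr where "Dr = (hu p q (r-s))^2 + q powi (m-s) * (hu p q (r-m))^2
                 + hu p q (r-s) * hu p q (r-m) * hv p q (m-s)"
  have Xne: "Xr \<noteq> 0" using assms(4) unfolding Xr_def .
  have XD: "Xr = q powi m * Dr"
  proof -
    have "q powi (2*m-s) = q powi m * q powi (m-s)"
      using assms(2) by (simp add: power_int_add[symmetric] algebra_simps)
    then show ?thesis unfolding Xr_def Dr_def by (simp add: algebra_simps)
  qed
  have Dne: "Dr \<noteq> 0" using Xne XD by auto
  have Xprod: "Xr = (a1 x - a2 x) * (a1 y - a2 y)"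
  proof -
    have c: "q powi (m-s) = (x powi m * y powi m)/(x powi s * y powi s)"
      using x0 y0 by (simp add: xyq[symmetric] power_int_mult_distrib power_int_diff)
    have v: "hv p q (m-s) = x powi m / x powi s + y powi m / y powi s"
      using x0 y0 by (simp add: hv_eq power_int_diff)
    have qm: "q powi m = x powi m * y powi m" by (simp add: xyq[symmetric] power_int_mult_distrib)
    show ?thesis
      unfolding XD Dr_def a1_a2_S_def U_V_W_def[symmetric] qm v
      using prodX[of "x powi s" "y powi s" "q powi (m-s)" "x powi m" "y powi m" U V] x0 y0 c
      by simp
  qed
  have fin: "N1/D + K*N2/X = T" if "X \<noteq> 0" "D \<noteq> 0" "X = Qm*D" "Qm*N1 + K*N2 = T*X"
    for N1 D K N2 X T Qm :: real
    using that by (simp add: field_simps)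
  have Rx: "((hu p q (r-s) ^ (n+2)) * x powi (m*int n + t) + (hu p q (r-s) ^ (n+1) * hu p q (r-m)) * x powi (m*int n + m + t - s)) / Dr
     + (-1)^n * (hu p q (r-m) ^ (n+1)) * ((q powi ((m-s)*(int n+1) + m) * hu p q (r-s)) * x powi (s*int n + s + t - m)
        + (q powi ((m-s)*(int n+2) + s) * hu p q (r-m)) * x powi (s*int n + t)) / Xr
     = x powi t * S x"
  proof (rule fin[OF Xne Dne XD])
    have F: "q powi m * (U^(n+2) * x powi (m*int n+t) + U^(n+1)*V * x powi (m*int n+m+t-s))
     + (-1)^n * V^(n+1) * (q powi ((m-s)*(int n+1)+m) * U * x powi (s*int n+s+t-m)
        + q powi ((m-s)*(int n+2)+s) * V * x powi (s*int n+t))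
       = x powi t * ((a1 x)^(n+1) - (a2 x)^(n+1)) * (a1 y - a2 y)"
      using termF[OF x0 y0, of m U n t V s] unfolding xyq a1_a2_S_def by simp
    have G: "(a1 x)^(n+1) - (a2 x)^(n+1) = (a1 x - a2 x) * S x" unfolding a1_a2_S_def geoB ..
    show "q powi m * (hu p q (r-s) ^ (n+2) * x powi (m*int n + t) + hu p q (r-s) ^ (n+1) * hu p q (r-m) * x powi (m*int n + m + t - s))
      + (-1)^n * (hu p q (r-m) ^ (n+1)) * (q powi ((m-s)*(int n+1) + m) * hu p q (r-s) * x powi (s*int n + s + t - m)
        + q powi ((m-s)*(int n+2) + s) * hu p q (r-m) * x powi (s*int n + t)) = x powi t * S x * Xr"
      unfolding U_V_W_def[symmetric] F G Xprod by (simp add: algebra_simps)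
  qed
  have Ry: "((hu p q (r-s) ^ (n+2)) * y powi (m*int n + t) + (hu p q (r-s) ^ (n+1) * hu p q (r-m)) * y powi (m*int n + m + t - s)) / Dr
     + (-1)^n * (hu p q (r-m) ^ (n+1)) * ((q powi ((m-s)*(int n+1) + m) * hu p q (r-s)) * y powi (s*int n + s + t - m)
        + (q powi ((m-s)*(int n+2) + s) * hu p q (r-m)) * y powi (s*int n + t)) / Xr
     = y powi t * S y"
  proof (rule fin[OF Xne Dne XD])
    have yx: "y * x = q" using xyq by (simp add: mult.commute)
    have F: "q powi m * (U^(n+2) * y powi (m*int n+t) + U^(n+1)*V * y powi (m*int n+m+t-s))
     + (-1)^n * V^(n+1) * (q powi ((m-s)*(int n+1)+m) * U * y powi (s*int n+s+t-m)
        + q powi ((m-s)*(int n+2)+s) * V * y powi (s*int n+t))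
       = y powi t * ((a1 y)^(n+1) - (a2 y)^(n+1)) * (a1 x - a2 x)"
      using termF[OF y0 x0, of m U n t V s] unfolding yx a1_a2_S_def by simp
    have G: "(a1 y)^(n+1) - (a2 y)^(n+1) = (a1 y - a2 y) * S y" unfolding a1_a2_S_def geoB ..
    show "q powi m * (hu p q (r-s) ^ (n+2) * y powi (m*int n + t) + hu p q (r-s) ^ (n+1) * hu p q (r-m) * y powi (m*int n + m + t - s))
      + (-1)^n * (hu p q (r-m) ^ (n+1)) * (q powi ((m-s)*(int n+1) + m) * hu p q (r-s) * y powi (s*int n + s + t - m)
        + q powi ((m-s)*(int n+2) + s) * hu p q (r-m) * y powi (s*int n + t)) = y powi t * S y * Xr"
      unfolding U_V_W_def[symmetric] F G Xprod by (simp add: algebra_simps)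
  qed
  have R: "(of_real (hu p q (r-s) ^ (n+2)) * horadam a b p q (m*int n + t)
        + of_real (hu p q (r-s) ^ (n+1) * hu p q (r-m)) * horadam a b p q (m*int n + m + t - s))
      / of_real ((hu p q (r-s))^2 + q powi (m-s) * (hu p q (r-m))^2
                 + hu p q (r-s) * hu p q (r-m) * hv p q (m-s))
      + ((-1)^n * of_real (hu p q (r-m) ^ (n+1)) *
          (of_real (q powi ((m-s)*(int n+1) + m) * hu p q (r-s)) * horadam a b p q (s*int n + s + t - m)
           + of_real (q powi ((m-s)*(int n+2) + s) * hu p q (r-m)) * horadam a b p q (s*int n + t)))
      / of_real (q powi m * (hu p q (r-s))^2 + q powi (2*m-s) * (hu p q (r-m))^2
         + q powi m * hu p q (r-s) * hu p q (r-m) * hv p q (m-s))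
     = A * of_real (x powi t * S x) + B * of_real (y powi t * S y)"
    unfolding Xr_def[symmetric] Dr_def[symmetric] hor lin4[OF Dne Xne] Rx Ry ..
  show ?thesis using L M R by simp
qed

end
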